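(* Let $\mathbb{K}$ be a field of characteristic zero and let $\mathbb{K}(x)[S_x]$ be the ring of linear recurrence operators, in which $S_x\, a(x) = a(x+1)\, S_x$ for $a\in\mathbb{K}(x)$. Let $m$ be a positive integer and let $L\in\mathbb{K}(x)[S_x]$ be nonzero, with $m$-exponent separation $L=L_0+L_1+\cdots+L_{m-1}$, where $L_i=\sum_{j=0}^{r_i}\ell_{i,j}S_x^{jm+i}$ with $\ell_{i,j}\in\mathbb{K}(x)$. Let $\mathcal{L}_m$ be the $m\times m$ matrix over $\mathbb{K}(x)[S_x]$ whose entry in row $i$ and column $j$ (indices $0\le i,j\le m-1$) is $L_{(i-j)\bmod m}$, i.e. its first row is $L_0, L_{m-1}, L_{m-2},\ldots,L_1$, its second row is $L_1,L_0,L_{m-1},\ldots,L_2$, and its last row is $L_{m-1},L_{m-2},\ldots,L_0$. Suppose $T_0,\ldots,T_{m-1}\in\mathbb{K}(x)[S_x]$ satisfy $[T_0,\ldots,T_{m-1}]\cdot\mathcal{L}_m=0$, i.e. $\sum_{i=0}^{m-1}T_i L_{(i-j)\bmod m}=0$ for every $j=0,\ldots,m-1$. Then $T_0+T_1+\cdots+T_{m-1}=0$.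
   Context: Products of operators are taken in the noncommutative ring $\mathbb{K}(x)[S_x]$, and the product of a row vector by a matrix is computed with the row entries multiplied on the left. *)

theory Defs
  imports "HOL-Computational_Algebra.Computational_Algebra"
begin

text \<open>The rational function field K(x) is modelled as the fraction field
  'a poly fract of K[x].  The shift automorphism sigma maps a(x) to a(x+1).\<close>

definition rshift :: "'a::field_char_0 poly fract \<Rightarrow> 'a poly fract" where
  "rshift f = (SOME g. \<exists>p q. q \<noteq> 0 \<and> f = Fract p q \<and>
       g = Fract (pcompose p [:1, 1:]) (pcompose q [:1, 1:]))"

text \<open>A recurrence operator sum_n c_n S_x^n in K(x)[S_x] is represented by its
  coefficient sequence c :: nat => K(x), required to have finite support.\<close>

definition is_op :: "(nat \<Rightarrow> 'a::field_char_0 poly fract) \<Rightarrow> bool" where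
  "is_op A \<longleftrightarrow> finite {n. A n \<noteq> 0}"

text \<open>Product in the Ore algebra, using S_x a = sigma(a) S_x:
  (A*B)_n = sum_{i<=n} A_i sigma^i(B_{n-i}).\<close>

definition ore_mult :: "(nat \<Rightarrow> 'a::field_char_0 poly fract) \<Rightarrow> (nat \<Rightarrow> 'a poly fract)
    \<Rightarrow> (nat \<Rightarrow> 'a poly fract)" where
  "ore_mult A B = (\<lambda>n. \<Sum>i\<le>n. A i * (rshift ^^ i) (B (n - i)))"

definition exp_sep :: "nat \<Rightarrow> (nat \<Rightarrow> 'a::field_char_0 poly fract) \<Rightarrow> nat
    \<Rightarrow> (nat \<Rightarrow> 'a poly fract)" where
  "exp_sep m L i = (\<lambda>n. if n mod m = i then L n else 0)"

end

theory Submission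
  imports Defs
begin

lemma Fract_zero_iff': "b \<noteq> 0 \<Longrightarrow> Fract a b = 0 \<longleftrightarrow> a = 0"
  by (simp add: Zero_fract_def eq_fract)

lemma rshift_zero_iff: "rshift (f::'a::field_char_0 poly fract) = 0 \<longleftrightarrow> f = 0"
proof -
  obtain a b where ab: "f = Fract a b" "b \<noteq> 0" by (cases f) auto
  have dg: "degree [:1, 1::'a:] > 0" by simp
  have "\<exists>g. \<exists>p q. q \<noteq> 0 \<and> f = Fract p q \<and>
       g = Fract (pcompose p [:1, 1:]) (pcompose q [:1, 1:])" using ab by blast
  from someI_ex[OF this] obtain p q where pq: "q \<noteq> 0" "f = Fract p q"
     "rshift f = Fract (pcompose p [:1, 1:]) (pcompose q [:1, 1:])"
    unfolding rshift_def by blast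
  have q': "pcompose q [:1, 1:] \<noteq> 0" using pq(1) pcompose_eq_0_iff[OF dg] by blast
  show ?thesis using pq q' Fract_zero_iff' pcompose_eq_0_iff[OF dg] by metis
qed

lemma rshift_pow_zero_iff: "(rshift ^^ k) (f::'a::field_char_0 poly fract) = 0 \<longleftrightarrow> f = 0"
  by (induction k) (auto simp: rshift_zero_iff)

lemma idx_unique:
  fixes m i j r :: nat
  assumes "i < m" "j < m" "r < m"
  shows "(i + m - j) mod m = r \<longleftrightarrow> j = (i + m - r) mod m"
  using assms
proof -
  have A: "(i + m - j) mod m = (if j \<le> i then i - j else i + m - j)"
    using assms by (auto simp: mod_if)
  have B: "(i + m - r) mod m = (if r \<le> i then i - r else i + m - r)"
    using assms by (auto simp: mod_if)
  show ?thesis unfolding A B using assms by auto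
qed

theorem lemma4p1:
  fixes m :: nat
    and L :: "nat \<Rightarrow> 'a::field_char_0 poly fract"
    and T :: "nat \<Rightarrow> nat \<Rightarrow> 'a poly fract"
  assumes "m > 0"
    and "is_op L" and "\<exists>n. L n \<noteq> 0"
    and "\<forall>i<m. is_op (T i)"
    and "\<forall>j<m. \<forall>n. (\<Sum>i<m. ore_mult (T i) (exp_sep m L ((i + m - j) mod m)) n) = 0"
  shows "\<forall>n. (\<Sum>i<m. T i n) = 0"
proof -
  have inner: "(\<Sum>j<m. (rshift ^^ k) (exp_sep m L ((i + m - j) mod m) p)) = (rshift ^^ k) (L p)"
    if "i < m" for i k p
  proof -
    define j0 where "j0 = (i + m - p mod m) mod m"
    have j0: "j0 < m" using assms(1) by (simp add: j0_def)
    have eq: "\<And>j. j < m \<Longrightarrow> (p mod m = (i + m - j) mod m) \<longleftrightarrow> j = j0"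
      using idx_unique[OF that _ mod_less_divisor[OF assms(1)]] j0_def by metis
    have "(\<Sum>j<m. (rshift ^^ k) (exp_sep m L ((i + m - j) mod m) p))
        = (rshift ^^ k) (exp_sep m L ((i + m - j0) mod m) p)
          + (\<Sum>j\<in>{..<m} - {j0}. (rshift ^^ k) (exp_sep m L ((i + m - j) mod m) p))"
      using j0 by (simp add: sum.remove)
    also have "(\<Sum>j\<in>{..<m} - {j0}. (rshift ^^ k) (exp_sep m L ((i + m - j) mod m) p)) = 0"
      by (rule sum.neutral) (auto simp: exp_sep_def eq rshift_pow_zero_iff)
    finally show ?thesis using eq[OF j0] by (simp add: exp_sep_def)
  qed
  have A: "(\<Sum>j<m. ore_mult (T i) (exp_sep m L ((i + m - j) mod m)) n) = ore_mult (T i) L n"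
    if "i < m" for i n
  proof -
    have "(\<Sum>j<m. ore_mult (T i) (exp_sep m L ((i + m - j) mod m)) n)
       = (\<Sum>k\<le>n. \<Sum>j<m. T i k * (rshift ^^ k) (exp_sep m L ((i + m - j) mod m) (n - k)))"
      unfolding ore_mult_def by (rule sum.swap)
    also have "\<dots> = (\<Sum>k\<le>n. T i k * (rshift ^^ k) (L (n - k)))"
      by (simp add: sum_distrib_left[symmetric] inner[OF that])
    finally show ?thesis by (simp add: ore_mult_def)
  qed
  define U where "U k = (\<Sum>i<m. T i k)" for k
  have B: "(\<Sum>k\<le>n. U k * (rshift ^^ k) (L (n - k))) = 0" for n
  proof -
    have "0 = (\<Sum>j<m. \<Sum>i<m. ore_mult (T i) (exp_sep m L ((i + m - j) mod m)) n)"
      using assms(5) by simp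
    also have "\<dots> = (\<Sum>i<m. \<Sum>j<m. ore_mult (T i) (exp_sep m L ((i + m - j) mod m)) n)"
      by (rule sum.swap)
    also have "\<dots> = (\<Sum>i<m. ore_mult (T i) L n)" using A by simp
    also have "\<dots> = (\<Sum>k\<le>n. U k * (rshift ^^ k) (L (n - k)))"
      unfolding ore_mult_def U_def sum_distrib_right by (rule sum.swap)
    finally show ?thesis by simp
  qed
  have finU: "finite {k. U k \<noteq> 0}"
  proof (rule finite_subset)
    show "{k. U k \<noteq> 0} \<subseteq> (\<Union>i<m. {k. T i k \<noteq> 0})"
      unfolding U_def by (auto intro: ccontr)
    show "finite (\<Union>i<m. {k. T i k \<noteq> 0})" using assms(4) by (auto simp: is_op_def)
  qed
  show ?thesis
  proof (rule ccontr)
    assume "\<not> ?thesis"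
    then have ne: "{k. U k \<noteq> 0} \<noteq> {}" by (auto simp: U_def)
    define a where "a = Max {k. U k \<noteq> 0}"
    have Ua: "U a \<noteq> 0" using Max_in[OF finU ne] a_def by simp
    have Ua': "\<And>k. k > a \<Longrightarrow> U k = 0" using Max_ge[OF finU] a_def by fastforce
    have finL: "finite {k. L k \<noteq> 0}" and neL: "{k. L k \<noteq> 0} \<noteq> {}"
      using assms(2,3) by (auto simp: is_op_def)
    define b where "b = Max {k. L k \<noteq> 0}"
    have Lb: "L b \<noteq> 0" using Max_in[OF finL neL] b_def by simp
    have Lb': "\<And>k. k > b \<Longrightarrow> L k = 0" using Max_ge[OF finL] b_def by fastforce
    have "(\<Sum>k\<le>a+b. U k * (rshift ^^ k) (L (a + b - k))) = U a * (rshift ^^ a) (L b)"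
    proof -
      have "(\<Sum>k\<le>a+b. U k * (rshift ^^ k) (L (a + b - k)))
          = U a * (rshift ^^ a) (L (a + b - a))
            + (\<Sum>k\<in>{..a+b} - {a}. U k * (rshift ^^ k) (L (a + b - k)))"
        by (rule sum.remove) auto
      also have "(\<Sum>k\<in>{..a+b} - {a}. U k * (rshift ^^ k) (L (a + b - k))) = 0"
      proof (rule sum.neutral, intro ballI)
        fix k assume k: "k \<in> {..a+b} - {a}"
        show "U k * (rshift ^^ k) (L (a + b - k)) = 0"
        proof (cases "k > a")
          case True then show ?thesis using Ua' by simp
        next
          case False
          then have "a + b - k > b" using k by auto
          then show ?thesis using Lb' by (simp add: rshift_pow_zero_iff)
        qed
      qed
      finally show ?thesis by simp
    qed
    moreover have "U a * (rshift ^^ a) (L b) \<noteq> 0"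
      using Ua Lb rshift_pow_zero_iff by auto
    ultimately show False using B by simp
  qed
qed

end
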